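(* Let $\pi:\mathrm{G}'\to\mathrm{G}$ be a surjective group homomorphism whose kernel $\mathrm{C}=\langle c\rangle$ has order $2$. Let $\Delta=\langle(c,c)\rangle\subseteq\mathrm{G}'\times\mathrm{G}'$. Let $\mathrm{H}$ be a subgroup of $\mathrm{G}$ and $\mathrm{H}_0=\{(h,h):h\in\mathrm{H}\}$ its diagonal embedding in $\mathrm{G}\times\mathrm{G}$. Then the pull-back of $\mathrm{H}_0$ under the natural surjection $(\mathrm{G}'\times\mathrm{G}')/\Delta\to\mathrm{G}\times\mathrm{G}$ is a trivial extension of $\mathrm{H}$ by $\mathrm{C}$ (i.e. isomorphic to $\mathrm{H}\times\mathrm{C}$ as an extension).
   Context: The kernel of the natural surjection $(\mathrm{G}'\times\mathrm{G}')/\Delta\to\mathrm{G}\times\mathrm{G}$ induced by $\pi\times\pi$ is the image of $\{(1,1),(1,c)\}$, identified with $\mathrm{C}$. *)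

theory Defs
  imports "HOL-Algebra.Algebra"
begin

text \<open>The natural map (G' x G')/Delta -> G x G induced by pi x pi, on cosets.\<close>
definition nat_sq_map :: "('a \<Rightarrow> 'b) \<Rightarrow> ('a \<times> 'a) set \<Rightarrow> 'b \<times> 'b" where
  "nat_sq_map f S = the_elem ((\<lambda>(x, y). (f x, f y)) ` S)"

definition diag :: "'b set \<Rightarrow> ('b \<times> 'b) set" where
  "diag H = {(h, h) | h. h \<in> H}"

end

theory Submission
  imports Defs
begin

theorem lemma3p5:
  fixes G' :: "('a, 'm) monoid_scheme" and G :: "('b, 'n) monoid_scheme"
    and p :: "'a \<Rightarrow> 'b" and c :: 'a and H :: "'b set"
    and \<Delta> :: "('a \<times> 'a) set" and Q :: "('a \<times> 'a) set monoid"
    and P :: "('a \<times> 'a) set set" and C :: "'a set"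
  assumes "group G'" and "group G"
    and "p \<in> hom G' G" and "p ` carrier G' = carrier G"
    and "c \<in> carrier G'"
    and "kernel G' G p = generate G' {c}"
    and "card (kernel G' G p) = 2"
    and "subgroup H G"
    and "\<Delta> = generate (DirProd G' G') {(c, c)}"
    and "Q = DirProd G' G' Mod \<Delta>"
    and "P = {S. S \<in> carrier Q \<and> nat_sq_map p S \<in> diag H}"
    and "C = kernel G' G p"
  shows "\<exists>\<phi>. \<phi> \<in> iso (DirProd (G\<lparr>carrier := H\<rparr>) (G'\<lparr>carrier := C\<rparr>)) (Q\<lparr>carrier := P\<rparr>)
            \<and> (\<forall>x\<in>C. \<phi> (\<one>\<^bsub>G\<^esub>, x) = \<Delta> #>\<^bsub>DirProd G' G'\<^esub> (\<one>\<^bsub>G'\<^esub>, x))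
            \<and> (\<forall>h\<in>H. \<forall>x\<in>C. fst (nat_sq_map p (\<phi> (h, x))) = h)"
proof -
  interpret G': group G' by fact
  interpret G: group G by fact
  interpret ph: group_hom G' G p
    using assms(1-3) by (simp add: group_hom_def group_hom_axioms_def)
  define M where "M = G' \<times>\<times> G'"
  interpret M: group M unfolding M_def by (rule DirProd_group) fact+
  have Cdef: "C = {x \<in> carrier G'. p x = \<one>\<^bsub>G\<^esub>}"
    using assms(12) by (simp add: kernel_def)
  have Csub: "subgroup C G'" using assms(12) ph.subgroup_kernel by simp
  have cC: "c \<in> C" using assms(6,12) generate.incl[of c "{c}" G'] by simp
  have pc: "p c = \<one>\<^bsub>G\<^esub>" using cC Cdef by simp
  have c1: "c \<noteq> \<one>\<^bsub>G'\<^esub>"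
  proof
    assume "c = \<one>\<^bsub>G'\<^esub>"
    then have "C \<subseteq> {\<one>\<^bsub>G'\<^esub>}"
      using assms(6,12) G'.generate_subgroup_incl[OF _ G'.triv_subgroup, of "{c}"] by simp
    then have "card C \<le> 1" by (metis card.empty card.insert card_mono finite.emptyI finite.insertI empty_iff One_nat_def)
    then show False using assms(7,12) by simp
  qed
  have C2: "C = {\<one>\<^bsub>G'\<^esub>, c}"
  proof -
    have fin: "finite C" using assms(7,12) card.infinite by fastforce
    have "{\<one>\<^bsub>G'\<^esub>, c} \<subseteq> C" using cC subgroup.one_closed[OF Csub] by simp
    moreover have "card {\<one>\<^bsub>G'\<^esub>, c} = card C" using c1 assms(7,12) by simp
    ultimately show ?thesis using card_subset_eq[OF fin] by metis
  qed
  have central: "g \<otimes>\<^bsub>G'\<^esub> x = x \<otimes>\<^bsub>G'\<^esub> g" if "g \<in> carrier G'" "x \<in> C" for g x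
  proof (cases "x = \<one>\<^bsub>G'\<^esub>")
    case True then show ?thesis using that by simp
  next
    case False
    then have xc: "x = c" using C2 that by auto
    have "g \<otimes>\<^bsub>G'\<^esub> c \<otimes>\<^bsub>G'\<^esub> inv\<^bsub>G'\<^esub> g \<in> C"
      using that assms(5) by (simp add: Cdef pc)
    moreover have "g \<otimes>\<^bsub>G'\<^esub> c \<otimes>\<^bsub>G'\<^esub> inv\<^bsub>G'\<^esub> g \<noteq> \<one>\<^bsub>G'\<^esub>"
    proof
      assume a: "g \<otimes>\<^bsub>G'\<^esub> c \<otimes>\<^bsub>G'\<^esub> inv\<^bsub>G'\<^esub> g = \<one>\<^bsub>G'\<^esub>"
      have "g \<otimes>\<^bsub>G'\<^esub> c = (g \<otimes>\<^bsub>G'\<^esub> c \<otimes>\<^bsub>G'\<^esub> inv\<^bsub>G'\<^esub> g) \<otimes>\<^bsub>G'\<^esub> g"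
        using that assms(5) by (simp add: G'.m_assoc)
      then have "g \<otimes>\<^bsub>G'\<^esub> c = g" using a that by simp
      then show False using c1 that assms(5) by simp
    qed
    ultimately have a: "g \<otimes>\<^bsub>G'\<^esub> c \<otimes>\<^bsub>G'\<^esub> inv\<^bsub>G'\<^esub> g = c" using C2 by auto
    have "g \<otimes>\<^bsub>G'\<^esub> c = (g \<otimes>\<^bsub>G'\<^esub> c \<otimes>\<^bsub>G'\<^esub> inv\<^bsub>G'\<^esub> g) \<otimes>\<^bsub>G'\<^esub> g"
      using that assms(5) by (simp add: G'.m_assoc)
    then have "g \<otimes>\<^bsub>G'\<^esub> c = c \<otimes>\<^bsub>G'\<^esub> g" using a by simp
    then show ?thesis using xc by simp
  qed
  have DM: "\<Delta> = {(x, x) | x. x \<in> C}"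
  proof
    have "subgroup {(x, x) | x. x \<in> C} M"
    proof (rule M.subgroupI)
      show "{(x, x) | x. x \<in> C} \<subseteq> carrier M" using Cdef by (auto simp: M_def)
      show "{(x, x) | x. x \<in> C} \<noteq> {}" using cC by auto
      show "inv\<^bsub>M\<^esub> a \<in> {(x, x) | x. x \<in> C}" if A: "a \<in> {(x, x) | x. x \<in> C}" for a
      proof -
        obtain x where x: "a = (x, x)" "x \<in> C" using A by blast
        have xc: "x \<in> carrier G'" using x(2) Cdef by blast
        have "inv\<^bsub>M\<^esub> a = (inv\<^bsub>G'\<^esub> x, inv\<^bsub>G'\<^esub> x)"
          unfolding M_def x(1) using inv_DirProd[OF assms(1) assms(1) xc xc] .
        then show ?thesis using subgroup.m_inv_closed[OF Csub x(2)] by blast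
      qed
      show "a \<otimes>\<^bsub>M\<^esub> b \<in> {(x, x) | x. x \<in> C}" if AB: "a \<in> {(x, x) | x. x \<in> C}" "b \<in> {(x, x) | x. x \<in> C}" for a b
      proof -
        obtain x where x: "a = (x, x)" "x \<in> C" using AB(1) by blast
        obtain y where y: "b = (y, y)" "y \<in> C" using AB(2) by blast
        have "a \<otimes>\<^bsub>M\<^esub> b = (x \<otimes>\<^bsub>G'\<^esub> y, x \<otimes>\<^bsub>G'\<^esub> y)" unfolding M_def x y by simp
        then show ?thesis using subgroup.m_closed[OF Csub x(2) y(2)] by blast
      qed
    qed
    moreover have "{(c,c)} \<subseteq> {(x, x) | x. x \<in> C}" using cC by blast
    ultimately show "\<Delta> \<subseteq> {(x, x) | x. x \<in> C}"
      using M.generate_subgroup_incl[of "{(c,c)}"] assms(9) unfolding M_def by blast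
    have "\<one>\<^bsub>M\<^esub> \<in> \<Delta>" using assms(9) generate.one[of M "{(c,c)}"] unfolding M_def by blast
    then have "(\<one>\<^bsub>G'\<^esub>, \<one>\<^bsub>G'\<^esub>) \<in> \<Delta>" unfolding M_def by simp
    moreover have "(c, c) \<in> \<Delta>" using assms(9) generate.incl[of "(c,c)" "{(c,c)}" "G' \<times>\<times> G'"] by blast
    ultimately show "{(x, x) | x. x \<in> C} \<subseteq> \<Delta>" using C2 by blast
  qed
  have coset: "\<Delta> #>\<^bsub>M\<^esub> (a, b) = {(z \<otimes>\<^bsub>G'\<^esub> a, z \<otimes>\<^bsub>G'\<^esub> b) | z. z \<in> C}" for a b
    unfolding DM r_coset_def by (auto simp: M_def)
  have Dsub: "subgroup \<Delta> M" using assms(9) M.generate_is_subgroup assms(5) by (simp add: M_def)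
  have Dnormal: "\<Delta> \<lhd> M"
    unfolding M.normal_inv_iff
  proof (intro conjI Dsub ballI)
    fix x h assume x: "x \<in> carrier M" and h: "h \<in> \<Delta>"
    then obtain z where z: "z \<in> C" "h = (z, z)" using DM by auto
    obtain x1 x2 where xx: "x = (x1, x2)" "x1 \<in> carrier G'" "x2 \<in> carrier G'"
      using x by (auto simp: M_def)
    have zc: "z \<in> carrier G'" using z Cdef by auto
    have e: "y \<otimes>\<^bsub>G'\<^esub> z \<otimes>\<^bsub>G'\<^esub> inv\<^bsub>G'\<^esub> y = z" if "y \<in> carrier G'" for y
    proof -
      have "y \<otimes>\<^bsub>G'\<^esub> z \<otimes>\<^bsub>G'\<^esub> inv\<^bsub>G'\<^esub> y = z \<otimes>\<^bsub>G'\<^esub> y \<otimes>\<^bsub>G'\<^esub> inv\<^bsub>G'\<^esub> y"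
        using central[OF that z(1)] by simp
      also have "\<dots> = z" using that zc by (simp add: G'.m_assoc)
      finally show ?thesis .
    qed
    have "x \<otimes>\<^bsub>M\<^esub> h \<otimes>\<^bsub>M\<^esub> inv\<^bsub>M\<^esub> x = h"
      unfolding xx z(2) M_def using inv_DirProd[OF assms(1) assms(1) xx(2,3)] e xx by simp
    then show "x \<otimes>\<^bsub>M\<^esub> h \<otimes>\<^bsub>M\<^esub> inv\<^bsub>M\<^esub> x \<in> \<Delta>" using h by simp
  qed
  have Csubc: "C \<subseteq> carrier G'" using Cdef by blast
  have HG: "H \<subseteq> carrier G" using assms(8) subgroup.subset by blast
  have nsm: "nat_sq_map p (\<Delta> #>\<^bsub>M\<^esub> (a, b)) = (p a, p b)"
    if "a \<in> carrier G'" "b \<in> carrier G'" for a b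
  proof -
    have "(\<lambda>(x, y). (p x, p y)) ` (\<Delta> #>\<^bsub>M\<^esub> (a, b)) = {(p a, p b)}"
    proof
      show "(\<lambda>(x, y). (p x, p y)) ` (\<Delta> #>\<^bsub>M\<^esub> (a, b)) \<subseteq> {(p a, p b)}"
        unfolding coset using that Cdef by auto
      have "(a, b) \<in> \<Delta> #>\<^bsub>M\<^esub> (a, b)" unfolding coset
        using that subgroup.one_closed[OF Csub] by force
      then show "{(p a, p b)} \<subseteq> (\<lambda>(x, y). (p x, p y)) ` (\<Delta> #>\<^bsub>M\<^esub> (a, b))" by force
    qed
    then show ?thesis unfolding nat_sq_map_def by simp
  qed
  have ceq: "\<Delta> #>\<^bsub>M\<^esub> (z \<otimes>\<^bsub>G'\<^esub> a, z \<otimes>\<^bsub>G'\<^esub> b) = \<Delta> #>\<^bsub>M\<^esub> (a, b)"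
    if "a \<in> carrier G'" "b \<in> carrier G'" "z \<in> C" for a b z
  proof -
    have "(z \<otimes>\<^bsub>G'\<^esub> a, z \<otimes>\<^bsub>G'\<^esub> b) \<in> \<Delta> #>\<^bsub>M\<^esub> (a, b)" unfolding coset using that by blast
    moreover have "(a, b) \<in> carrier M" using that by (simp add: M_def)
    ultimately show ?thesis using M.repr_independence Dsub by metis
  qed
  have cmem: "\<exists>z\<in>C. a' = z \<otimes>\<^bsub>G'\<^esub> a \<and> b' = z \<otimes>\<^bsub>G'\<^esub> b"
    if "a' \<in> carrier G'" "b' \<in> carrier G'" "\<Delta> #>\<^bsub>M\<^esub> (a', b') = \<Delta> #>\<^bsub>M\<^esub> (a, b)" for a b a' b'
  proof -
    have "(a', b') \<in> \<Delta> #>\<^bsub>M\<^esub> (a', b')" unfolding coset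
      using that subgroup.one_closed[OF Csub] by force
    then have "(a', b') \<in> \<Delta> #>\<^bsub>M\<^esub> (a, b)" using that(3) by simp
    then obtain z where z: "z \<in> C" "(a', b') = (z \<otimes>\<^bsub>G'\<^esub> a, z \<otimes>\<^bsub>G'\<^esub> b)"
      unfolding coset by blast
    show ?thesis by (rule bexI[of _ z]) (use z in simp_all)
  qed
  define s where "s h = (SOME x. x \<in> carrier G' \<and> p x = h)" for h
  have s: "s h \<in> carrier G' \<and> p (s h) = h" if "h \<in> carrier G" for h
  proof -
    have "h \<in> p ` carrier G'" using that assms(4) by simp
    then obtain x where "x \<in> carrier G'" "h = p x" by (rule imageE)
    then have "\<exists>x. x \<in> carrier G' \<and> p x = h" by blast
    then show ?thesis unfolding s_def by (rule someI_ex)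
  qed
  define \<phi> where "\<phi> = (\<lambda>(h, k). \<Delta> #>\<^bsub>M\<^esub> (s h, s h \<otimes>\<^bsub>G'\<^esub> k))"
  have carQ: "carrier Q = rcosets\<^bsub>M\<^esub> \<Delta>" unfolding assms(10) M_def by (simp add: FactGroup_def)
  have mulQ: "monoid.mult Q = set_mult M" unfolding assms(10) M_def by (simp add: FactGroup_def)
  have phiP: "\<phi> (h, k) \<in> P" and phi_fst: "fst (nat_sq_map p (\<phi> (h, k))) = h"
    if "h \<in> H" "k \<in> C" for h k
  proof -
    have sh: "s h \<in> carrier G'" "p (s h) = h" using s that HG by auto
    have kc: "k \<in> carrier G'" "p k = \<one>\<^bsub>G\<^esub>" using that Cdef by auto
    have n: "nat_sq_map p (\<phi> (h, k)) = (h, h)"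
      unfolding \<phi>_def using nsm sh kc that HG by (simp add: subset_iff)
    then show "fst (nat_sq_map p (\<phi> (h, k))) = h" by simp
    have "\<phi> (h, k) \<in> carrier Q" unfolding carQ \<phi>_def RCOSETS_def using sh kc by (auto simp: M_def)
    then show "\<phi> (h, k) \<in> P" using n that assms(11) by (simp add: diag_def)
  qed
  show ?thesis
  proof (intro exI[of _ \<phi>] conjI ballI)
    have phi1: "\<phi> (\<one>\<^bsub>G\<^esub>, x) = \<Delta> #>\<^bsub>M\<^esub> (\<one>\<^bsub>G'\<^esub>, x)" if "x \<in> C" for x
    proof -
      have s1: "s \<one>\<^bsub>G\<^esub> \<in> C" using s[of "\<one>\<^bsub>G\<^esub>"] Cdef by simp
      have xc: "x \<in> carrier G'" using that Cdef by simp
      have "\<phi> (\<one>\<^bsub>G\<^esub>, x) = \<Delta> #>\<^bsub>M\<^esub> (s \<one>\<^bsub>G\<^esub> \<otimes>\<^bsub>G'\<^esub> \<one>\<^bsub>G'\<^esub>, s \<one>\<^bsub>G\<^esub> \<otimes>\<^bsub>G'\<^esub> x)"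
        unfolding \<phi>_def using s1 Csubc by auto
      also have "\<dots> = \<Delta> #>\<^bsub>M\<^esub> (\<one>\<^bsub>G'\<^esub>, x)" using ceq s1 xc by simp
      finally show ?thesis .
    qed
    show "\<phi> (\<one>\<^bsub>G\<^esub>, x) = \<Delta> #>\<^bsub>G' \<times>\<times> G'\<^esub> (\<one>\<^bsub>G'\<^esub>, x)" if "x \<in> C" for x
      using phi1[OF that] unfolding M_def .
    show "fst (nat_sq_map p (\<phi> (h, x))) = h" if "h \<in> H" "x \<in> C" for h x
      using phi_fst that .
    show "\<phi> \<in> iso (G\<lparr>carrier := H\<rparr> \<times>\<times> G'\<lparr>carrier := C\<rparr>) (Q\<lparr>carrier := P\<rparr>)"
    proof -
      have mult: "\<phi> (h \<otimes>\<^bsub>G\<^esub> h', k \<otimes>\<^bsub>G'\<^esub> k') = \<phi> (h, k) <#>\<^bsub>M\<^esub> \<phi> (h', k')"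
        if "h \<in> H" "k \<in> C" "h' \<in> H" "k' \<in> C" for h k h' k'
      proof -
        have hc: "h \<in> carrier G" "h' \<in> carrier G" using that HG by auto
        have kc: "k \<in> carrier G'" "k' \<in> carrier G'" using that Cdef by auto
        have sh: "s h \<in> carrier G'" "p (s h) = h" "s h' \<in> carrier G'" "p (s h') = h'"
          using s hc by auto
        have hh: "h \<otimes>\<^bsub>G\<^esub> h' \<in> carrier G" using hc by simp
        define a where "a = s (h \<otimes>\<^bsub>G\<^esub> h')"
        have ac: "a \<in> carrier G'" "p a = h \<otimes>\<^bsub>G\<^esub> h'" using s[OF hh] a_def by auto
        define u where "u = s h \<otimes>\<^bsub>G'\<^esub> s h'"
        have uc: "u \<in> carrier G'" "p u = h \<otimes>\<^bsub>G\<^esub> h'" using sh u_def by auto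
        define z where "z = u \<otimes>\<^bsub>G'\<^esub> inv\<^bsub>G'\<^esub> a"
        have zC: "z \<in> C" unfolding Cdef z_def using ac uc hh by simp
        have za: "z \<otimes>\<^bsub>G'\<^esub> a = u" unfolding z_def using ac uc by (simp add: G'.m_assoc)
        have kk: "k \<otimes>\<^bsub>G'\<^esub> k' \<in> carrier G'" using kc by simp
        have "\<phi> (h, k) <#>\<^bsub>M\<^esub> \<phi> (h', k') =
              \<Delta> #>\<^bsub>M\<^esub> ((s h, s h \<otimes>\<^bsub>G'\<^esub> k) \<otimes>\<^bsub>M\<^esub> (s h', s h' \<otimes>\<^bsub>G'\<^esub> k'))"
          unfolding \<phi>_def using normal.rcos_sum[OF Dnormal] sh kc by (simp add: M_def)
        also have "(s h, s h \<otimes>\<^bsub>G'\<^esub> k) \<otimes>\<^bsub>M\<^esub> (s h', s h' \<otimes>\<^bsub>G'\<^esub> k')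
             = (s h \<otimes>\<^bsub>G'\<^esub> s h', s h \<otimes>\<^bsub>G'\<^esub> k \<otimes>\<^bsub>G'\<^esub> (s h' \<otimes>\<^bsub>G'\<^esub> k'))"
          by (simp add: M_def)
        also have "s h \<otimes>\<^bsub>G'\<^esub> k \<otimes>\<^bsub>G'\<^esub> (s h' \<otimes>\<^bsub>G'\<^esub> k') = s h \<otimes>\<^bsub>G'\<^esub> (k \<otimes>\<^bsub>G'\<^esub> s h') \<otimes>\<^bsub>G'\<^esub> k'"
          using sh kc by (simp add: G'.m_assoc)
        also have "\<dots> = s h \<otimes>\<^bsub>G'\<^esub> (s h' \<otimes>\<^bsub>G'\<^esub> k) \<otimes>\<^bsub>G'\<^esub> k'"
          using central[OF sh(3) that(2)] by simp
        also have "\<dots> = (s h \<otimes>\<^bsub>G'\<^esub> s h') \<otimes>\<^bsub>G'\<^esub> (k \<otimes>\<^bsub>G'\<^esub> k')"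
          using sh kc by (simp add: G'.m_assoc)
        also have "\<dots> = (z \<otimes>\<^bsub>G'\<^esub> a) \<otimes>\<^bsub>G'\<^esub> (k \<otimes>\<^bsub>G'\<^esub> k')" using za u_def by simp
        also have "\<dots> = z \<otimes>\<^bsub>G'\<^esub> (a \<otimes>\<^bsub>G'\<^esub> (k \<otimes>\<^bsub>G'\<^esub> k'))"
          using zC Csubc ac kk by (simp add: G'.m_assoc subset_iff)
        also have "s h \<otimes>\<^bsub>G'\<^esub> s h' = z \<otimes>\<^bsub>G'\<^esub> a" using za u_def by simp
        also have "\<Delta> #>\<^bsub>M\<^esub> (z \<otimes>\<^bsub>G'\<^esub> a, z \<otimes>\<^bsub>G'\<^esub> (a \<otimes>\<^bsub>G'\<^esub> (k \<otimes>\<^bsub>G'\<^esub> k'))) = \<Delta> #>\<^bsub>M\<^esub> (a, a \<otimes>\<^bsub>G'\<^esub> (k \<otimes>\<^bsub>G'\<^esub> k'))"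
          using ceq ac kk zC by simp
        finally show ?thesis unfolding \<phi>_def a_def by simp
      qed
      have inj: "inj_on \<phi> (H \<times> C)"
      proof (rule inj_onI)
        fix x y assume x: "x \<in> H \<times> C" and y: "y \<in> H \<times> C" and e: "\<phi> x = \<phi> y"
        obtain h k where hk: "x = (h, k)" "h \<in> H" "k \<in> C" using x by blast
        obtain h' k' where hk': "y = (h', k')" "h' \<in> H" "k' \<in> C" using y by blast
        have "h = h'" using phi_fst[OF hk(2,3)] phi_fst[OF hk'(2,3)] e hk hk' by simp
        have sh: "s h \<in> carrier G'" using s hk HG by auto
        have kc: "k \<in> carrier G'" "k' \<in> carrier G'" using hk hk' Cdef by auto
        have "\<Delta> #>\<^bsub>M\<^esub> (s h, s h \<otimes>\<^bsub>G'\<^esub> k) = \<Delta> #>\<^bsub>M\<^esub> (s h, s h \<otimes>\<^bsub>G'\<^esub> k')"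
          using e hk hk' \<open>h = h'\<close> unfolding \<phi>_def by simp
        then obtain z where z: "z \<in> C" "s h = z \<otimes>\<^bsub>G'\<^esub> s h" "s h \<otimes>\<^bsub>G'\<^esub> k = z \<otimes>\<^bsub>G'\<^esub> (s h \<otimes>\<^bsub>G'\<^esub> k')"
          using cmem[of "s h" "s h \<otimes>\<^bsub>G'\<^esub> k" "s h" "s h \<otimes>\<^bsub>G'\<^esub> k'"] sh kc by auto
        have zc: "z \<in> carrier G'" using z Csubc by auto
        have "z = \<one>\<^bsub>G'\<^esub>" using z(2) sh zc G'.r_cancel_one' by metis
        then have "k = k'" using z(3) sh kc by simp
        then show "x = y" using hk hk' \<open>h = h'\<close> by simp
      qed
      have img: "\<phi> ` (H \<times> C) = P"
      proof
        show "\<phi> ` (H \<times> C) \<subseteq> P" using phiP by auto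
        show "P \<subseteq> \<phi> ` (H \<times> C)"
        proof
          fix S assume SP: "S \<in> P"
          then have "S \<in> rcosets\<^bsub>M\<^esub> \<Delta>" using assms(11) carQ by simp
          then obtain a b where ab: "a \<in> carrier G'" "b \<in> carrier G'" "S = \<Delta> #>\<^bsub>M\<^esub> (a, b)"
            unfolding RCOSETS_def by (auto simp: M_def)
          have "(p a, p b) \<in> diag H" using SP assms(11) nsm ab by simp
          then have pab: "p a \<in> H" "p b = p a" by (auto simp: diag_def)
          define h where "h = p a"
          have sh: "s h \<in> carrier G'" "p (s h) = h" using s pab HG h_def by auto
          define k where "k = inv\<^bsub>G'\<^esub> a \<otimes>\<^bsub>G'\<^esub> b"
          have kC: "k \<in> C" unfolding Cdef k_def using ab pab HG by auto
          define z where "z = a \<otimes>\<^bsub>G'\<^esub> inv\<^bsub>G'\<^esub> s h"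
          have zC: "z \<in> C" unfolding Cdef z_def using ab sh h_def by auto
          have kc: "k \<in> carrier G'" using kC Csubc by auto
          have e1: "z \<otimes>\<^bsub>G'\<^esub> s h = a" unfolding z_def using ab sh by (simp add: G'.m_assoc)
          have e2: "z \<otimes>\<^bsub>G'\<^esub> (s h \<otimes>\<^bsub>G'\<^esub> k) = b"
            using e1 ab sh zC Csubc unfolding k_def by (simp add: G'.m_assoc[symmetric] subset_iff)
          have "\<phi> (h, k) = \<Delta> #>\<^bsub>M\<^esub> (s h, s h \<otimes>\<^bsub>G'\<^esub> k)" unfolding \<phi>_def by simp
          also have "\<dots> = \<Delta> #>\<^bsub>M\<^esub> (z \<otimes>\<^bsub>G'\<^esub> s h, z \<otimes>\<^bsub>G'\<^esub> (s h \<otimes>\<^bsub>G'\<^esub> k))"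
            using ceq sh kc zC by simp
          also have "\<dots> = S" using e1 e2 ab by simp
          finally show "S \<in> \<phi> ` (H \<times> C)" using pab kC h_def by force
        qed
      qed
      have carA: "carrier (G\<lparr>carrier := H\<rparr> \<times>\<times> G'\<lparr>carrier := C\<rparr>) = H \<times> C" by simp
      have carB: "carrier (Q\<lparr>carrier := P\<rparr>) = P" by simp
      show ?thesis
      proof (rule isoI)
        show "bij_betw \<phi> (carrier (G\<lparr>carrier := H\<rparr> \<times>\<times> G'\<lparr>carrier := C\<rparr>)) (carrier (Q\<lparr>carrier := P\<rparr>))"
          unfolding carA carB bij_betw_def using inj img by blast
        show "\<phi> \<in> hom (G\<lparr>carrier := H\<rparr> \<times>\<times> G'\<lparr>carrier := C\<rparr>) (Q\<lparr>carrier := P\<rparr>)"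
        proof (rule homI)
          fix x assume "x \<in> carrier (G\<lparr>carrier := H\<rparr> \<times>\<times> G'\<lparr>carrier := C\<rparr>)"
          then obtain h k where "x = (h, k)" "h \<in> H" "k \<in> C" unfolding carA by blast
          then show "\<phi> x \<in> carrier (Q\<lparr>carrier := P\<rparr>)" unfolding carB using phiP by blast
        next
          fix x y assume x: "x \<in> carrier (G\<lparr>carrier := H\<rparr> \<times>\<times> G'\<lparr>carrier := C\<rparr>)"
            and y: "y \<in> carrier (G\<lparr>carrier := H\<rparr> \<times>\<times> G'\<lparr>carrier := C\<rparr>)"
          obtain h k where hk: "x = (h, k)" "h \<in> H" "k \<in> C" using x unfolding carA by blast
          obtain h' k' where hk': "y = (h', k')" "h' \<in> H" "k' \<in> C" using y unfolding carA by blast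
          have "x \<otimes>\<^bsub>G\<lparr>carrier := H\<rparr> \<times>\<times> G'\<lparr>carrier := C\<rparr>\<^esub> y = (h \<otimes>\<^bsub>G\<^esub> h', k \<otimes>\<^bsub>G'\<^esub> k')"
            unfolding hk hk' by simp
          moreover have "\<phi> x \<otimes>\<^bsub>Q\<lparr>carrier := P\<rparr>\<^esub> \<phi> y = \<phi> (h, k) <#>\<^bsub>M\<^esub> \<phi> (h', k')"
            unfolding hk hk' using mulQ by simp
          ultimately show "\<phi> (x \<otimes>\<^bsub>G\<lparr>carrier := H\<rparr> \<times>\<times> G'\<lparr>carrier := C\<rparr>\<^esub> y) = \<phi> x \<otimes>\<^bsub>Q\<lparr>carrier := P\<rparr>\<^esub> \<phi> y"
            using mult[OF hk(2,3) hk'(2,3)] by simp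
        qed
      qed
    qed
  qed
qed
end
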